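(* Under the setting of the single-position greedy algorithm (with $\boldsymbol\epsilon\in[0,1]^V$, rays $R$ with $|R|\ge K$, vectors $\mathbf p_j\in[0,1]^V$, greedy iterates $\mathbf b^t$, $f^t=\sum_i b^t_i$, $E=\sum_i\epsilon_i$, and $\mathrm{OPT}=\min_{S\subseteq R,|S|=K}\sum_i\prod_{j\in S}p_{ij}$), suppose $\mathrm{OPT}>0$ and let $\mathrm{LB}$ be any number with $0<\mathrm{LB}\le \mathrm{OPT}$. Then the approximation ratio $\rho = f^K/\mathrm{OPT}$ satisfies $$\rho \le \frac{E}{\mathrm{LB}\cdot e} + \Big(1-\frac{1}{e}\Big).$$
   Context: Greedy algorithm: $\mathbf b^0=\boldsymbol\epsilon$, $A_0=R$; at iteration $t=1,\dots,K$ choose $j_t\in\arg\min_{j\in A_{t-1}}\sum_i b^{t-1}_i p_{ij}$, set $\mathbf b^t=\mathbf b^{t-1}\odot\mathbf p_{j_t}$ (coordinatewise product), $A_t=A_{t-1}\setminus\{j_t\}$. $e$ is Euler's number. *)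

theory Defs
  imports Complex_Main
begin

text \<open>Greedy iterate: b^t_i = eps_i * prod_{s=1..t} p_{i, js s}.
  Rays are indexed by 'r, positions by 'v; p j i denotes p_{ij}.\<close>
definition greedy_b :: "('v \<Rightarrow> real) \<Rightarrow> ('r \<Rightarrow> 'v \<Rightarrow> real) \<Rightarrow> (nat \<Rightarrow> 'r) \<Rightarrow> nat \<Rightarrow> 'v \<Rightarrow> real" where
  "greedy_b eps p js t i = eps i * (\<Prod>s\<in>{1..t}. p (js s) i)"

definition greedy_run :: "'v set \<Rightarrow> 'r set \<Rightarrow> ('v \<Rightarrow> real) \<Rightarrow> ('r \<Rightarrow> 'v \<Rightarrow> real) \<Rightarrow> nat \<Rightarrow> (nat \<Rightarrow> 'r) \<Rightarrow> bool" where
  "greedy_run V R eps p K js \<longleftrightarrow>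
     (\<forall>t\<in>{1..K}. js t \<in> R - js ` {1..<t} \<and>
        (\<forall>j\<in>R - js ` {1..<t}.
           (\<Sum>i\<in>V. greedy_b eps p js (t - 1) i * p (js t) i) \<le> (\<Sum>i\<in>V. greedy_b eps p js (t - 1) i * p j i)))"

definition OPT :: "'v set \<Rightarrow> 'r set \<Rightarrow> ('r \<Rightarrow> 'v \<Rightarrow> real) \<Rightarrow> nat \<Rightarrow> real" where
  "OPT V R p K = Min {(\<Sum>i\<in>V. \<Prod>j\<in>S. p j i) | S. S \<subseteq> R \<and> card S = K}"

end

theory Submission
  imports Defs
begin
lemma weier:
  fixes q :: "'a \<Rightarrow> real"
  assumes "finite A" "\<forall>j\<in>A. 0 \<le> q j \<and> q j \<le> 1"
  shows "1 - (\<Prod>j\<in>A. q j) \<le> (\<Sum>j\<in>A. 1 - q j)"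
  using assms
proof (induction A rule: finite_induct)
  case empty then show ?case by simp
next
  case (insert x F)
  have p0: "0 \<le> (\<Prod>j\<in>F. q j)" "(\<Prod>j\<in>F. q j) \<le> 1"
    using insert by (auto intro: prod_nonneg prod_le_1)
  have qx: "0 \<le> q x" "q x \<le> 1" using insert.prems by auto
  have "1 - (\<Prod>j\<in>insert x F. q j) = 1 - q x * (\<Prod>j\<in>F. q j)" using insert by simp
  also have "\<dots> \<le> (1 - q x) + (1 - (\<Prod>j\<in>F. q j))"
  proof -
    have "0 \<le> (1 - q x) * (1 - (\<Prod>j\<in>F. q j))" using qx p0 by simp
    then show ?thesis by (simp add: algebra_simps)
  qed
  also have "\<dots> \<le> (1 - q x) + (\<Sum>j\<in>F. 1 - q j)" using insert by simp
  finally show ?case using insert by simp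
qed

lemma b_Suc: "greedy_b eps p js (Suc t) i = greedy_b eps p js t i * p (js (Suc t)) i"
  unfolding greedy_b_def by (simp add: atLeastAtMostSuc_conv)

lemma b0: "greedy_b eps p js 0 i = eps i"
  unfolding greedy_b_def by simp
theorem mainTheorem3:
  fixes V :: "'v set" and R :: "'r set" and eps :: "'v \<Rightarrow> real"
    and p :: "'r \<Rightarrow> 'v \<Rightarrow> real" and K :: nat and js :: "nat \<Rightarrow> 'r" and LB :: real
  assumes "finite V" and "finite R" and "card R \<ge> K"
    and "\<forall>i\<in>V. 0 \<le> eps i \<and> eps i \<le> 1"
    and "\<forall>j\<in>R. \<forall>i\<in>V. 0 \<le> p j i \<and> p j i \<le> 1"
    and "greedy_run V R eps p K js"
    and "OPT V R p K > 0"
    and "0 < LB" and "LB \<le> OPT V R p K"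
  shows "(\<Sum>i\<in>V. greedy_b eps p js K i) / OPT V R p K
           \<le> (\<Sum>i\<in>V. eps i) / (LB * exp 1) + (1 - 1 / exp 1)"
proof -
  note fV = assms(1) and fR = assms(2) and epsb = assms(4) and pb = assms(5)
  have gr: "\<And>t. t \<in> {1..K} \<Longrightarrow> js t \<in> R - js ` {1..<t} \<and>
        (\<forall>j\<in>R - js ` {1..<t}.
           (\<Sum>i\<in>V. greedy_b eps p js (t - 1) i * p (js t) i) \<le> (\<Sum>i\<in>V. greedy_b eps p js (t - 1) i * p j i))"
    using assms(6) unfolding greedy_run_def by blast
  define b where "b = greedy_b eps p js"
  define f where "f t = (\<Sum>i\<in>V. b t i)" for t
  define E where "E = (\<Sum>i\<in>V. eps i)"
  define Opt where "Opt = OPT V R p K"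
  let ?M = "{(\<Sum>i\<in>V. \<Prod>j\<in>S. p j i) | S. S \<subseteq> R \<and> card S = K}"
  have Mfin: "finite ?M"
  proof -
    have "?M \<subseteq> (\<lambda>S. \<Sum>i\<in>V. \<Prod>j\<in>S. p j i) ` Pow R" by auto
    then show ?thesis using fR finite_subset by blast
  qed
  obtain S0 where "S0 \<subseteq> R" "card S0 = K" using obtain_subset_with_card_n[OF assms(3)] by metis
  then have Mne: "?M \<noteq> {}" by blast
  have "Opt \<in> ?M" unfolding Opt_def OPT_def using Min_in[OF Mfin Mne] .
  then obtain S where SR: "S \<subseteq> R" and cS: "card S = K" and OS: "Opt = (\<Sum>i\<in>V. \<Prod>j\<in>S. p j i)"
    by blast
  have fS: "finite S" using SR fR finite_subset by blast
  define T where "T = (\<Sum>i\<in>V. eps i * (\<Prod>j\<in>S. p j i))"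
  have pS: "\<And>i. i \<in> V \<Longrightarrow> 0 \<le> (\<Prod>j\<in>S. p j i) \<and> (\<Prod>j\<in>S. p j i) \<le> 1"
    using SR pb by (auto intro: prod_nonneg prod_le_1)
  have TO: "T \<le> Opt" unfolding T_def OS
    by (rule sum_mono) (use pS epsb in \<open>simp add: mult_left_le_one_le\<close>)
  have T0: "0 \<le> T" unfolding T_def using pS epsb by (auto intro: sum_nonneg)
  have ET: "T \<le> E" unfolding T_def E_def
    by (rule sum_mono) (use pS epsb in \<open>simp add: mult_right_le_one_le\<close>)
  have E0: "0 \<le> E" unfolding E_def using epsb by (auto intro: sum_nonneg)
  have inj: "inj_on js {1..K}"
  proof (rule inj_onI)
    fix s t assume st: "s \<in> {1..K}" "t \<in> {1..K}" "js s = js t"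
    show "s = t"
    proof (rule ccontr)
      assume "s \<noteq> t"
      then consider "s < t" | "t < s" by linarith
      then show False
      proof cases
        case 1 then have "s \<in> {1..<t}" using st by auto
        then have "js s \<in> js ` {1..<t}" by (rule imageI)
        then show False using gr[OF st(2)] st(3) by auto
      next
        case 2 then have "t \<in> {1..<s}" using st by auto
        then have "js t \<in> js ` {1..<s}" by (rule imageI)
        then show False using gr[OF st(1)] st(3) by auto
      qed
    qed
  qed
  have jsR: "\<And>t. t \<in> {1..K} \<Longrightarrow> js t \<in> R" using gr by blast
  have bprod: "\<And>s i. s \<le> K \<Longrightarrow> b s i = eps i * (\<Prod>j\<in>js ` {1..s}. p j i)"
  proof -
    fix s i assume "s \<le> K"
    then have "inj_on js {1..s}" by (intro inj_on_subset[OF inj]) auto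
    then show "b s i = eps i * (\<Prod>j\<in>js ` {1..s}. p j i)"
      unfolding b_def greedy_b_def by (simp add: prod.reindex)
  qed
  have b_nn: "\<And>s i. s \<le> K \<Longrightarrow> i \<in> V \<Longrightarrow> 0 \<le> b s i"
  proof -
    fix s i assume "s \<le> K" "i \<in> V"
    then show "0 \<le> b s i" unfolding b_def greedy_b_def using epsb jsR pb
      by (intro mult_nonneg_nonneg prod_nonneg) fastforce+
  qed
  have step: "f (Suc s) - T \<le> (1 - 1 / real K) * (f s - T)" if sK: "s < K" for s
  proof -
    define G where "G = js ` {1..s}"
    define U where "U = S - G"
    have fU: "finite U" using fS U_def by auto
    have GR: "G \<subseteq> R" using jsR sK G_def by auto
    have UA: "U \<subseteq> R - js ` {1..<Suc s}" unfolding U_def G_def using SR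
      by (auto simp: atLeastLessThanSuc_atLeastAtMost)
    have grs: "js (Suc s) \<in> R - js ` {1..<Suc s}" and
      grm: "\<And>j. j \<in> R - js ` {1..<Suc s} \<Longrightarrow> f (Suc s) \<le> (\<Sum>i\<in>V. b s i * p j i)"
      using gr[of "Suc s"] sK unfolding f_def b_def by (auto simp: b_Suc)
    have pjs: "\<And>i. i \<in> V \<Longrightarrow> 0 \<le> p (js (Suc s)) i \<and> p (js (Suc s)) i \<le> 1"
      using grs pb by auto
    have mono: "f (Suc s) \<le> f s" unfolding f_def b_def b_Suc
      by (rule sum_mono) (use pjs b_nn sK in \<open>auto simp: b_def intro: mult_right_le_one_le\<close>)
    have cardU: "card U \<le> K" unfolding U_def using cS fS by (metis Diff_subset card_mono)
    have "(\<Sum>j\<in>U. \<Sum>i\<in>V. b s i * (1 - p j i)) = real (card U) * f s - (\<Sum>j\<in>U. \<Sum>i\<in>V. b s i * p j i)"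
      by (simp add: f_def algebra_simps sum_subtractf sum.distrib)
    also have "\<dots> \<le> real (card U) * f s - real (card U) * f (Suc s)"
    proof -
      have "(\<Sum>j\<in>U. f (Suc s)) \<le> (\<Sum>j\<in>U. \<Sum>i\<in>V. b s i * p j i)"
        by (rule sum_mono) (use grm UA in auto)
      then show ?thesis by simp
    qed
    finally have A1: "(\<Sum>j\<in>U. \<Sum>i\<in>V. b s i * (1 - p j i)) \<le> real (card U) * (f s - f (Suc s))"
      by (simp add: algebra_simps)
    have "f s - T \<le> (\<Sum>i\<in>V. b s i * (1 - (\<Prod>j\<in>U. p j i)))"
    proof -
      have "(\<Sum>i\<in>V. b s i * (\<Prod>j\<in>U. p j i)) \<le> T" unfolding T_def
      proof (rule sum_mono)
        fix i assume iV: "i \<in> V"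
        have pG: "\<forall>j\<in>G. 0 \<le> p j i \<and> p j i \<le> 1" using GR pb iV by auto
        have fG: "finite G" unfolding G_def by simp
        have "G - G \<inter> S = G - S" by blast
        have "(\<Prod>j\<in>G. p j i) = (\<Prod>j\<in>G \<inter> S. p j i) * (\<Prod>j\<in>G - S. p j i)"
          using prod.subset_diff[of "G \<inter> S" G "\<lambda>j. p j i"] fG \<open>G - G \<inter> S = G - S\<close> by (simp add: mult.commute)
        also have "\<dots> \<le> (\<Prod>j\<in>G \<inter> S. p j i)"
          using pG by (intro mult_right_le_one_le prod_nonneg prod_le_1) auto
        finally have g1: "(\<Prod>j\<in>G. p j i) \<le> (\<Prod>j\<in>G \<inter> S. p j i)" .
        have "S - G \<inter> S = S - G" by blast
        have sS: "(\<Prod>j\<in>S. p j i) = (\<Prod>j\<in>G \<inter> S. p j i) * (\<Prod>j\<in>U. p j i)"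
          unfolding U_def using prod.subset_diff[of "G \<inter> S" S "\<lambda>j. p j i"] fS \<open>S - G \<inter> S = S - G\<close>
          by (simp add: mult.commute)
        have pU: "0 \<le> (\<Prod>j\<in>U. p j i)" using pS iV SR pb unfolding U_def
          by (intro prod_nonneg) auto
        have "b s i * (\<Prod>j\<in>U. p j i) = eps i * (\<Prod>j\<in>G. p j i) * (\<Prod>j\<in>U. p j i)"
          using bprod sK G_def by simp
        also have "\<dots> \<le> eps i * (\<Prod>j\<in>G \<inter> S. p j i) * (\<Prod>j\<in>U. p j i)"
          using g1 pU epsb iV by (intro mult_right_mono mult_left_mono) auto
        finally show "b s i * (\<Prod>j\<in>U. p j i) \<le> eps i * (\<Prod>j\<in>S. p j i)" using sS
          by (simp add: mult.assoc)
      qed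
      then show ?thesis unfolding f_def by (simp add: algebra_simps sum_subtractf)
    qed
    also have "\<dots> \<le> (\<Sum>i\<in>V. b s i * (\<Sum>j\<in>U. 1 - p j i))"
    proof (rule sum_mono)
      fix i assume iV: "i \<in> V"
      have "1 - (\<Prod>j\<in>U. p j i) \<le> (\<Sum>j\<in>U. 1 - p j i)"
        using weier[OF fU, of "\<lambda>j. p j i"] pb SR iV unfolding U_def by auto
      then show "b s i * (1 - (\<Prod>j\<in>U. p j i)) \<le> b s i * (\<Sum>j\<in>U. 1 - p j i)"
        using b_nn[of s i] sK iV by (intro mult_left_mono) auto
    qed
    also have "\<dots> = (\<Sum>j\<in>U. \<Sum>i\<in>V. b s i * (1 - p j i))"
      unfolding sum_distrib_left by (rule sum.swap)
    also have "\<dots> \<le> real (card U) * (f s - f (Suc s))" by (rule A1)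
    also have "\<dots> \<le> real K * (f s - f (Suc s))"
      using cardU mono by (intro mult_right_mono) auto
    finally have key: "f s - T \<le> real K * (f s - f (Suc s))" .
    have Kp: "real K > 0" using sK by simp
    have "f (Suc s) \<le> f s - (f s - T) / real K"
      using key Kp by (simp add: field_simps)
    then show ?thesis by (simp add: algebra_simps)
  qed
  have ind: "t \<le> K \<Longrightarrow> f t - T \<le> (1 - 1 / real K) ^ t * (E - T)" for t
  proof (induction t)
    case 0 then show ?case by (simp add: f_def b_def b0 E_def)
  next
    case (Suc t)
    have c: "0 \<le> 1 - 1 / real K" using Suc.prems by (simp add: field_simps)
    have "f (Suc t) - T \<le> (1 - 1 / real K) * (f t - T)" using step Suc.prems by simp
    also have "\<dots> \<le> (1 - 1 / real K) * ((1 - 1 / real K) ^ t * (E - T))"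
      using Suc c by (intro mult_left_mono) auto
    finally show ?case by simp
  qed
  have fin: "f K \<le> T + exp (-1) * (E - T)"
  proof (cases "K = 0")
    case True
    then have "S = {}" using cS fS by simp
    then show ?thesis using True by (simp add: f_def b_def b0 E_def T_def)
  next
    case False
    have c: "0 \<le> 1 - 1 / real K" using False by (simp add: field_simps)
    have "(1 - 1 / real K) ^ K \<le> exp (- 1 / real K) ^ K"
      using c exp_ge_add_one_self[of "- 1 / real K"] by (intro power_mono) auto
    also have "\<dots> = exp (-1)" using False by (simp add: exp_of_nat_mult[symmetric])
    finally have "(1 - 1 / real K) ^ K \<le> exp (-1)" .
    then have "(1 - 1 / real K) ^ K * (E - T) \<le> exp (-1) * (E - T)"
      using ET by (intro mult_right_mono) auto
    then show ?thesis using ind[of K] by simp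
  qed
  have O0: "Opt > 0" using assms(7) Opt_def by simp
  have ee: "exp (-1::real) = 1 / exp 1" by (simp add: exp_minus field_simps)
  have e0: "0 < exp (1::real)" by simp
  have "f K \<le> (1 - 1 / exp 1) * Opt + E / exp 1"
  proof -
    have "f K \<le> (1 - 1 / exp 1) * T + E / exp 1" using fin ee by (simp add: algebra_simps diff_divide_distrib)
    also have "\<dots> \<le> (1 - 1 / exp 1) * Opt + E / exp 1"
      using TO e0 by (intro add_right_mono mult_left_mono) (auto simp: field_simps)
    finally show ?thesis .
  qed
  then have "f K / Opt \<le> (1 - 1 / exp 1) + E / (exp 1 * Opt)"
    using O0 by (simp add: field_simps)
  also have "E / (exp 1 * Opt) \<le> E / (LB * exp 1)"
    using assms(8,9) Opt_def E0 e0 by (intro divide_left_mono) (auto simp: mult.commute intro: mult_right_mono)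
  finally show ?thesis unfolding f_def b_def E_def Opt_def by simp
qed

end
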